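(* Let $1\leq p\leq q$ be integers. Then $K_{p,q}$ is strong $p$-cop-win, and it is not strong $k$-cop-win for any $1\leq k\leq p-1$. Furthermore, $$\lim_{m\to\infty}\mathrm{capt}_p(K_{p,q},m)=\begin{cases}2\lceil q/p\rceil-2, & q>p,\\ 1, & q=p.\end{cases}$$
   Context: $K_{p,q}$ is the complete bipartite graph with parts of sizes $p$ and $q$. All graphs are reflexive (a player may stay in place). The game of $k$ cops and $m$ robbers on $G$: in round 0 the cops first choose starting vertices, then the robbers choose theirs. In each round $i\geq 1$, all $k$ cops move (each to an adjacent vertex or staying), then all $m$ robbers move likewise. Several players may occupy the same vertex. Whenever a cop and some robbers occupy the same vertex, those robbers are captured and take no further part in the game. Both sides have full information. The cops win if all robbers are captured after finitely many rounds. $G$ is $k$-cop-win if $k$ cops can always win against one robber. For a $k$-cop-win graph $G$, $\mathrm{capt}_k(G,m)$ is the index of the round in which the last robber is captured when $k$ cops play to minimize this index and $m$ robbers play to maximize it. $G$ is strong $k$-cop-win if $\lim_{m\to\infty}\mathrm{capt}_k(G,m)$ exists (and is finite). *)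

theory Defs
  imports Complex_Main
begin

text \<open>Players may
  always stay in place (reflexive graphs), which is built into the move relations.
  Cop positions: a list of length k; robber positions: a list of length m of
  options, None meaning the robber has been captured.\<close>

definition cmove :: "'v set \<Rightarrow> ('v \<Rightarrow> 'v \<Rightarrow> bool) \<Rightarrow> 'v list \<Rightarrow> 'v list \<Rightarrow> bool" where
  "cmove V E xs ys \<longleftrightarrow> length ys = length xs \<and>
     (\<forall>i<length xs. ys ! i \<in> V \<and> (ys ! i = xs ! i \<or> E (xs ! i) (ys ! i)))"

definition rmove :: "'v set \<Rightarrow> ('v \<Rightarrow> 'v \<Rightarrow> bool) \<Rightarrow> 'v option list \<Rightarrow> 'v option list \<Rightarrow> bool" where
  "rmove V E rs rs' \<longleftrightarrow> length rs' = length rs \<and>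
     (\<forall>i<length rs. (case rs ! i of
        None \<Rightarrow> rs' ! i = None
      | Some v \<Rightarrow> (\<exists>w. rs' ! i = Some w \<and> w \<in> V \<and> (w = v \<or> E v w))))"

definition capture :: "'v list \<Rightarrow> 'v option list \<Rightarrow> 'v option list" where
  "capture C R = map (\<lambda>r. case r of None \<Rightarrow> None
                                | Some v \<Rightarrow> (if v \<in> set C then None else Some v)) R"

definition all_caught :: "'v option list \<Rightarrow> bool" where
  "all_caught R \<longleftrightarrow> (\<forall>r\<in>set R. r = None)"

fun cops_win_within :: "'v set \<Rightarrow> ('v \<Rightarrow> 'v \<Rightarrow> bool) \<Rightarrow> nat \<Rightarrow> 'v list \<Rightarrow> 'v option list \<Rightarrow> bool" where
  "cops_win_within V E 0 C R = all_caught R"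
| "cops_win_within V E (Suc n) C R =
     (all_caught R \<or>
      (\<exists>C'. cmove V E C C' \<and>
         (\<forall>R'. rmove V E (capture C' R) R' \<longrightarrow> cops_win_within V E n C' (capture C' R'))))"

definition capt_bound :: "'v set \<Rightarrow> ('v \<Rightarrow> 'v \<Rightarrow> bool) \<Rightarrow> nat \<Rightarrow> nat \<Rightarrow> nat \<Rightarrow> bool" where
  "capt_bound V E k m t \<longleftrightarrow>
     (\<exists>C0. length C0 = k \<and> set C0 \<subseteq> V \<and>
        (\<forall>R0. length R0 = m \<and> set R0 \<subseteq> V \<longrightarrow>
           cops_win_within V E t C0 (capture C0 (map Some R0))))"

definition capt :: "'v set \<Rightarrow> ('v \<Rightarrow> 'v \<Rightarrow> bool) \<Rightarrow> nat \<Rightarrow> nat \<Rightarrow> nat" where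
  "capt V E k m = (LEAST t. capt_bound V E k m t)"

definition cop_win :: "'v set \<Rightarrow> ('v \<Rightarrow> 'v \<Rightarrow> bool) \<Rightarrow> nat \<Rightarrow> bool" where
  "cop_win V E k \<longleftrightarrow> (\<exists>t. capt_bound V E k 1 t)"

definition strong_cop_win :: "'v set \<Rightarrow> ('v \<Rightarrow> 'v \<Rightarrow> bool) \<Rightarrow> nat \<Rightarrow> bool" where
  "strong_cop_win V E k \<longleftrightarrow> cop_win V E k \<and> convergent (\<lambda>m. real (capt V E k m))"

definition Kpq_V :: "nat \<Rightarrow> nat \<Rightarrow> (nat + nat) set" where
  "Kpq_V p q = Inl ` {..<p} \<union> Inr ` {..<q}"

definition Kpq_E :: "nat + nat \<Rightarrow> nat + nat \<Rightarrow> bool" where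
  "Kpq_E x y \<longleftrightarrow> isl x \<noteq> isl y"

end

theory Submission
  imports Defs
begin


definition nxt :: "'v set \<Rightarrow> ('v \<Rightarrow> 'v \<Rightarrow> bool) \<Rightarrow> 'v set \<Rightarrow> 'v set \<Rightarrow> 'v set" where
  "nxt V E D S = {u \<in> V. u \<notin> S \<and> (\<exists>v\<in>D. v \<notin> S \<and> (u = v \<or> E v u))}"

fun clr :: "'v set \<Rightarrow> ('v \<Rightarrow> 'v \<Rightarrow> bool) \<Rightarrow> nat \<Rightarrow> 'v list \<Rightarrow> 'v set \<Rightarrow> bool" where
  "clr V E 0 C D = (D = {})"
| "clr V E (Suc n) C D = (D = {} \<or> (\<exists>C'. cmove V E C C' \<and> clr V E n C' (nxt V E D (set C'))))"

lemma capture_nth: "i < length R \<Longrightarrow> capture C R ! i =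
   (case R ! i of None \<Rightarrow> None | Some v \<Rightarrow> (if v \<in> set C then None else Some v))"
  by (simp add: capture_def)

lemma capture_length[simp]: "length (capture C R) = length R"
  by (simp add: capture_def)

lemma capture_Some: "i < length R \<Longrightarrow> capture C R ! i = Some w \<longleftrightarrow> R ! i = Some w \<and> w \<notin> set C"
  by (auto simp: capture_nth split: option.splits)

lemma all_caught_nth: "all_caught R \<longleftrightarrow> (\<forall>i<length R. R ! i = None)"
  unfolding all_caught_def by (metis in_set_conv_nth)

lemma cww_Suc: "cops_win_within V E n C R \<Longrightarrow> cops_win_within V E (Suc n) C R"
proof (induction n arbitrary: C R)
  case 0 then show ?case by simp
next
  case (Suc n)
  then show ?case by (metis cops_win_within.simps(2))
qed

lemma cww_mono: assumes "cops_win_within V E n C R" "n \<le> n'" shows "cops_win_within V E n' C R"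
  using assms(2)
proof (induction n' rule: dec_induct)
  case base then show ?case using assms(1) by simp
next
  case (step k) then show ?case using cww_Suc by blast
qed

lemma clr_empty: "clr V E n C {}"
  by (cases n) auto

lemma nxt_mono: "D2 \<subseteq> D \<Longrightarrow> nxt V E D2 S \<subseteq> nxt V E D S"
  by (auto simp: nxt_def)

lemma clr_monoD: "clr V E n C D \<Longrightarrow> D2 \<subseteq> D \<Longrightarrow> clr V E n C D2"
proof (induction n arbitrary: C D D2)
  case 0 then show ?case by simp
next
  case (Suc n)
  then show ?case by (metis clr.simps(2) nxt_mono subset_empty)
qed

lemma clr_Suc: "clr V E n C D \<Longrightarrow> clr V E (Suc n) C D"
proof (induction n arbitrary: C D)
  case 0 then show ?case by simp
next
  case (Suc n)
  then show ?case by (metis clr.simps(2))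
qed

lemma clr_mono: assumes "clr V E n C D" "n \<le> n'" shows "clr V E n' C D"
  using assms(2)
proof (induction n' rule: dec_induct)
  case base then show ?case using assms(1) by simp
next
  case (step k) then show ?case using clr_Suc by blast
qed

text \<open>Upper bound: clearing the contaminated set wins.\<close>
lemma clr_cww:
  "clr V E n C D \<Longrightarrow> (\<forall>i<length R. \<forall>v. R ! i = Some v \<longrightarrow> v \<in> D) \<Longrightarrow> cops_win_within V E n C R"
proof (induction n arbitrary: C D R)
  case 0
  then show ?case by (simp add: all_caught_nth)
next
  case (Suc n)
  show ?case
  proof (cases "D = {}")
    case True
    then show ?thesis using Suc.prems by (auto simp: all_caught_nth)
  next
    case False
    then obtain C' where cm: "cmove V E C C'" and cl: "clr V E n C' (nxt V E D (set C'))"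
      using Suc.prems by auto
    have "cops_win_within V E n C' (capture C' R')" if rm: "rmove V E (capture C' R) R'" for R'
    proof (rule Suc.IH[OF cl], intro allI impI)
      fix i w assume i: "i < length (capture C' R')" and w: "capture C' R' ! i = Some w"
      have len: "length R' = length R" using rm by (simp add: rmove_def)
      have iR: "i < length R" using i len by simp
      from w i have Ri: "R' ! i = Some w" and wS: "w \<notin> set C'" by (auto simp: capture_Some)
      from rm iR have cs: "case capture C' R ! i of None \<Rightarrow> R' ! i = None
           | Some v \<Rightarrow> (\<exists>w. R' ! i = Some w \<and> w \<in> V \<and> (w = v \<or> E v w))"
        by (simp add: rmove_def)
      then obtain v where cv: "capture C' R ! i = Some v" and wV: "w \<in> V" and vw: "w = v \<or> E v w"
        using Ri by (cases "capture C' R ! i") auto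
      from cv iR have "R ! i = Some v" "v \<notin> set C'" by (auto simp: capture_Some)
      with Suc.prems(2) iR have "v \<in> D" by auto
      then show "w \<in> nxt V E D (set C')"
        using wV wS vw \<open>v \<notin> set C'\<close> by (auto simp: nxt_def)
    qed
    then show ?thesis using cm by auto
  qed
qed

lemma split_fun:
  assumes "finite T" "T \<noteq> {}"
  shows "finite I \<Longrightarrow> card T * f \<le> card I \<Longrightarrow>
     \<exists>g. (\<forall>i\<in>I. g i \<in> T) \<and> (\<forall>u\<in>T. f \<le> card {i\<in>I. g i = u})"
  using assms
proof (induction T arbitrary: I rule: finite_ne_induct)
  case (singleton x)
  then show ?case by (rule_tac x="\<lambda>_. x" in exI) simp
next
  case (insert x F)
  have "f \<le> card I" using insert.prems insert.hyps by (simp add: card_insert_disjoint)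
  then obtain J where J: "J \<subseteq> I" "card J = f"
    by (meson obtain_subset_with_card_n)
  have fJ: "finite J" using J insert.prems(1) finite_subset by blast
  have cIJ: "card (I - J) = card I - f" using J fJ by (simp add: card_Diff_subset)
  have "card F * f \<le> card (I - J)"
    using insert.prems insert.hyps cIJ by (simp add: card_insert_disjoint)
  then obtain g0 where g0: "\<forall>i\<in>I - J. g0 i \<in> F" "\<forall>u\<in>F. f \<le> card {i \<in> I - J. g0 i = u}"
    using insert.IH insert.prems by blast
  define g where "g i = (if i \<in> J then x else g0 i)" for i
  have "\<forall>i\<in>I. g i \<in> insert x F" using g0 by (auto simp: g_def)
  moreover have "f \<le> card {i \<in> I. g i = u}" if u: "u \<in> insert x F" for u
  proof (cases "u = x")
    case True
    have "J \<subseteq> {i \<in> I. g i = u}" using J True by (auto simp: g_def)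
    then show ?thesis using J insert.prems(1) by (metis (no_types, lifting) card_mono finite_subset mem_Collect_eq subsetI)
  next
    case False
    then have uF: "u \<in> F" using u by auto
    have "{i \<in> I - J. g0 i = u} \<subseteq> {i \<in> I. g i = u}" by (auto simp: g_def)
    moreover have "finite {i \<in> I. g i = u}" using insert.prems(1) by auto
    ultimately show ?thesis using g0(2) uF by (meson card_mono le_trans)
  qed
  ultimately show ?case by blast
qed

definition cnt :: "'v option list \<Rightarrow> 'v \<Rightarrow> nat" where
  "cnt R v = card {i. i < length R \<and> R ! i = Some v}"

lemma cnt_pos: "1 \<le> cnt R v \<Longrightarrow> \<exists>i<length R. R ! i = Some v"
  unfolding cnt_def by (metis (mono_tags, lifting) Collect_empty_eq card.empty not_one_le_zero)

lemma not_all_caught: "1 \<le> cnt R v \<Longrightarrow> \<not> all_caught R"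
  using cnt_pos all_caught_nth by fastforce

lemma cww_lower:
  assumes "finite V"
  shows "D \<subseteq> V \<Longrightarrow> (\<forall>i<length R. \<forall>v. R ! i = Some v \<longrightarrow> v \<in> V) \<Longrightarrow>
     (\<forall>v\<in>D. card V ^ n \<le> cnt R v) \<Longrightarrow> \<not> clr V E n C D \<Longrightarrow> \<not> cops_win_within V E n C R"
proof (induction n arbitrary: C D R)
  case 0
  then obtain v where "v \<in> D" by auto
  with 0 have "1 \<le> cnt R v" by auto
  then show ?case using not_all_caught by (metis cops_win_within.simps(1))
next
  case (Suc n)
  note DV = Suc.prems(1) and RV = Suc.prems(2) and cntD = Suc.prems(3)
  from Suc.prems(4) have Dne: "D \<noteq> {}" and nc: "\<And>C'. cmove V E C C' \<Longrightarrow> \<not> clr V E n C' (nxt V E D (set C'))"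
    by auto
  obtain v0 where v0: "v0 \<in> D" using Dne by auto
  have cV: "1 \<le> card V" using v0 DV assms by (metis One_nat_def Suc_leI card_gt_0_iff empty_iff subsetD)
  have "1 \<le> card V ^ Suc n" using cV by simp
  then have "1 \<le> cnt R v0" using cntD v0 by (meson le_trans)
  then have nac: "\<not> all_caught R" by (rule not_all_caught)
  show ?case
  proof
    assume "cops_win_within V E (Suc n) C R"
    with nac obtain C' where cm: "cmove V E C C'" and
      win: "\<And>R'. rmove V E (capture C' R) R' \<Longrightarrow> cops_win_within V E n C' (capture C' R')"
      by auto
    define S' where "S' = set C'"
    define I where "I v = {i. i < length R \<and> R ! i = Some v}" for v
    define T where "T v = {u \<in> V. u \<notin> S' \<and> (u = v \<or> E v u)}" for v
    define f where "f = card V ^ n"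
    have "\<forall>v\<in>D - S'. \<exists>g. (\<forall>i\<in>I v. g i \<in> T v) \<and> (\<forall>u\<in>T v. f \<le> card {i\<in>I v. g i = u})"
    proof
      fix v assume v: "v \<in> D - S'"
      have fT: "finite (T v)" using assms by (simp add: T_def)
      have "v \<in> T v" using v DV by (auto simp: T_def)
      then have Tne: "T v \<noteq> {}" by auto
      have "card (T v) \<le> card V" using assms by (intro card_mono) (auto simp: T_def)
      then have "card (T v) * f \<le> card V * f" by simp
      also have "\<dots> = card V ^ Suc n" by (simp add: f_def)
      also have "\<dots> \<le> card (I v)" using cntD v by (simp add: cnt_def I_def)
      finally show "\<exists>g. (\<forall>i\<in>I v. g i \<in> T v) \<and> (\<forall>u\<in>T v. f \<le> card {i\<in>I v. g i = u})"
        using split_fun[OF fT Tne, of "I v" f] by (simp add: I_def)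
    qed
    then obtain G where G: "\<And>v. v \<in> D - S' \<Longrightarrow> (\<forall>i\<in>I v. G v i \<in> T v) \<and> (\<forall>u\<in>T v. f \<le> card {i\<in>I v. G v i = u})"
      by metis
    define R1 where "R1 = capture C' R"
    define R' where "R' = map (\<lambda>i. case R1 ! i of None \<Rightarrow> None
         | Some v \<Rightarrow> (if v \<in> D then Some (G v i) else Some v)) [0..<length R]"
    have lenR': "length R' = length R" by (simp add: R'_def)
    have R1S: "i < length R \<Longrightarrow> R1 ! i = Some v \<longleftrightarrow> R ! i = Some v \<and> v \<notin> S'" for i v
      by (simp add: R1_def S'_def capture_Some)
    have rm: "rmove V E R1 R'"
      unfolding rmove_def
    proof (intro conjI allI impI)
      show "length R' = length R1" by (simp add: lenR' R1_def)
      fix i assume "i < length R1"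
      then have i: "i < length R" by (simp add: R1_def)
      show "case R1 ! i of None \<Rightarrow> R' ! i = None
          | Some v \<Rightarrow> \<exists>w. R' ! i = Some w \<and> w \<in> V \<and> (w = v \<or> E v w)"
      proof (cases "R1 ! i")
        case None
        then show ?thesis using i by (simp add: R'_def)
      next
        case (Some v)
        then have Rv: "R ! i = Some v" "v \<notin> S'" using R1S i by auto
        have vV: "v \<in> V" using RV Rv i by auto
        show ?thesis
        proof (cases "v \<in> D")
          case True
          have "i \<in> I v" using Rv i by (simp add: I_def)
          then have "G v i \<in> T v" using G[of v] True Rv by auto
          then show ?thesis using Some True i by (simp add: R'_def T_def)
        next
          case False
          then show ?thesis using Some i vV by (simp add: R'_def)
        qed
      qed
    qed
    have RV': "\<forall>i<length (capture C' R'). \<forall>w. capture C' R' ! i = Some w \<longrightarrow> w \<in> V"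
    proof (intro allI impI)
      fix i w assume i: "i < length (capture C' R')" and w: "capture C' R' ! i = Some w"
      have i': "i < length R1" using i lenR' by (simp add: R1_def)
      from w i have "R' ! i = Some w" by (simp add: capture_Some)
      with rm i' show "w \<in> V" unfolding rmove_def
        by (cases "R1 ! i") (auto elim!: allE[of _ i])
    qed
    have cnt': "\<forall>u\<in>nxt V E D S'. card V ^ n \<le> cnt (capture C' R') u"
    proof
      fix u assume u: "u \<in> nxt V E D S'"
      then obtain v where v: "v \<in> D" "v \<notin> S'" and uT: "u \<in> T v"
        by (auto simp: nxt_def T_def)
      have "{i\<in>I v. G v i = u} \<subseteq> {i. i < length (capture C' R') \<and> capture C' R' ! i = Some u}"
      proof
        fix i assume i: "i \<in> {i\<in>I v. G v i = u}"
        then have il: "i < length R" and Ri: "R ! i = Some v" and Gi: "G v i = u" by (auto simp: I_def)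
        have "R1 ! i = Some v" using R1S il Ri v by auto
        then have "R' ! i = Some u" using il v Gi by (simp add: R'_def)
        moreover have "u \<notin> S'" using uT by (simp add: T_def)
        ultimately show "i \<in> {i. i < length (capture C' R') \<and> capture C' R' ! i = Some u}"
          using il lenR' by (simp add: capture_Some S'_def)
      qed
      then have "card {i\<in>I v. G v i = u} \<le> cnt (capture C' R') u"
        unfolding cnt_def by (intro card_mono) auto
      moreover have "f \<le> card {i\<in>I v. G v i = u}" using G[of v] v uT by auto
      ultimately show "card V ^ n \<le> cnt (capture C' R') u" by (simp add: f_def)
    qed
    have DV': "nxt V E D S' \<subseteq> V" by (auto simp: nxt_def)
    have "\<not> cops_win_within V E n C' (capture C' R')"
      using Suc.IH[OF DV' RV' cnt'] nc[OF cm] by (simp add: S'_def)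
    with win[OF rm[unfolded R1_def]] show False by simp
  qed
qed

lemma capt_bound_lower:
  assumes fin: "finite V"
    and nc: "\<And>C0. length C0 = k \<Longrightarrow> set C0 \<subseteq> V \<Longrightarrow> \<not> clr V E t C0 (V - set C0)"
    and m: "card V ^ Suc t \<le> m"
  shows "\<not> capt_bound V E k m t"
proof
  assume "capt_bound V E k m t"
  then obtain C0 where C0: "length C0 = k" "set C0 \<subseteq> V" and
    win: "\<And>R0. length R0 = m \<Longrightarrow> set R0 \<subseteq> V \<Longrightarrow> cops_win_within V E t C0 (capture C0 (map Some R0))"
    unfolding capt_bound_def by blast
  define D0 where "D0 = V - set C0"
  have ncl: "\<not> clr V E t C0 D0" using nc C0 by (simp add: D0_def)
  then have D0ne: "D0 \<noteq> {}" using clr_empty by metis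
  have fD: "finite D0" using fin by (simp add: D0_def)
  have "card D0 * card V ^ t \<le> card V * card V ^ t"
    using fin by (simp add: D0_def card_mono)
  also have "\<dots> \<le> card {..<m}" using m by simp
  finally obtain g where g: "\<forall>i\<in>{..<m}. g i \<in> D0" "\<forall>u\<in>D0. card V ^ t \<le> card {i\<in>{..<m}. g i = u}"
    using split_fun[OF fD D0ne, of "{..<m}" "card V ^ t"] by auto
  define R0 where "R0 = map g [0..<m]"
  have len: "length R0 = m" by (simp add: R0_def)
  have sR: "set R0 \<subseteq> V" using g(1) by (auto simp: R0_def D0_def)
  define R where "R = capture C0 (map Some R0)"
  have Rn: "i < m \<Longrightarrow> R ! i = Some (g i)" for i
    using g(1) by (simp add: R_def capture_nth R0_def D0_def)
  have lenR: "length R = m" by (simp add: R_def len)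
  have RV: "\<forall>i<length R. \<forall>v. R ! i = Some v \<longrightarrow> v \<in> V"
    using Rn lenR g(1) by (auto simp: D0_def)
  have cntR: "\<forall>v\<in>D0. card V ^ t \<le> cnt R v"
  proof
    fix v assume v: "v \<in> D0"
    have "{i\<in>{..<m}. g i = v} \<subseteq> {i. i < length R \<and> R ! i = Some v}"
      using Rn lenR by auto
    then have "card {i\<in>{..<m}. g i = v} \<le> cnt R v" unfolding cnt_def
      by (intro card_mono) (auto simp: lenR)
    then show "card V ^ t \<le> cnt R v" using g(2) v by (meson le_trans)
  qed
  have "\<not> cops_win_within V E t C0 R"
    using cww_lower[OF fin _ RV cntR ncl] by (auto simp: D0_def)
  with win[OF len sR] show False by (simp add: R_def)
qed



lemma memV: "x \<in> Kpq_V p q \<longleftrightarrow> (case x of Inl i \<Rightarrow> i < p | Inr j \<Rightarrow> j < q)"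
  by (cases x) (auto simp: Kpq_V_def)

lemma finV: "finite (Kpq_V p q)"
  by (simp add: Kpq_V_def)

lemma cardV: "card (Kpq_V p q) = p + q"
  unfolding Kpq_V_def
  by (subst card_Un_disjoint) (auto simp: card_image inj_on_def)

lemma E_iff: "Kpq_E x y \<longleftrightarrow> isl x \<noteq> isl y"
  by (simp add: Kpq_E_def)

lemma side_card:
  assumes "cmove V Kpq_E C C'"
  shows "card ((set C \<union> set C') \<inter> {x. isl x = b}) \<le> length C"
proof -
  have len: "length C' = length C" and mv: "\<And>i. i < length C \<Longrightarrow> C' ! i = C ! i \<or> isl (C ! i) \<noteq> isl (C' ! i)"
    using assms by (auto simp: cmove_def E_iff)
  define h where "h i = (if isl (C ! i) = b then C ! i else C' ! i)" for i
  have "(set C \<union> set C') \<inter> {x. isl x = b} \<subseteq> h ` {..<length C}"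
  proof
    fix x assume x: "x \<in> (set C \<union> set C') \<inter> {x. isl x = b}"
    show "x \<in> h ` {..<length C}"
    proof (cases "x \<in> set C")
      case True
      then obtain i where "i < length C" "x = C ! i" by (auto simp: in_set_conv_nth)
      then show ?thesis using x by (auto simp: h_def)
    next
      case False
      then have "x \<in> set C'" using x by auto
      then obtain i where i: "i < length C" "x = C' ! i" using len by (auto simp: in_set_conv_nth)
      have "h i = x" using mv[OF i(1)] x i by (auto simp: h_def)
      then show ?thesis using i(1) by (metis image_eqI lessThan_iff)
    qed
  qed
  then have "card ((set C \<union> set C') \<inter> {x. isl x = b}) \<le> card (h ` {..<length C})"
    by (intro card_mono) auto
  also have "\<dots> \<le> length C" using card_image_le[of "{..<length C}" h] by simp
  finally show ?thesis .
qed

definition LL :: "nat \<Rightarrow> (nat + nat) set" where "LL p = Inl ` {..<p}"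
definition RR :: "nat \<Rightarrow> (nat + nat) set" where "RR q = Inr ` {..<q}"

lemma cardLL: "card (LL p) = p" by (simp add: LL_def card_image)
lemma finLL: "finite (LL p)" by (simp add: LL_def)
lemma finRR: "finite (RR q)" by (simp add: RR_def)
lemma cardRR: "card (RR q) = q" by (simp add: RR_def card_image)

lemma LL_side: "LL p \<subseteq> {x. isl x = True}" by (auto simp: LL_def)
lemma RR_side: "RR q \<subseteq> {x. isl x = False}" by (auto simp: RR_def)

lemma V_LR: "Kpq_V p q = LL p \<union> RR q" by (simp add: Kpq_V_def LL_def RR_def)

lemma inV_isl: "x \<in> Kpq_V p q \<Longrightarrow> isl x \<Longrightarrow> x \<in> LL p"
  by (cases x) (auto simp: memV LL_def)
lemma inV_nisl: "x \<in> Kpq_V p q \<Longrightarrow> \<not> isl x \<Longrightarrow> x \<in> RR q"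
  by (cases x) (auto simp: memV RR_def)

lemma side_free:
  assumes "cmove V Kpq_E C C'" "length C < card X" "X \<subseteq> {x. isl x = b}" "finite X"
  shows "\<exists>x\<in>X. x \<notin> set C \<and> x \<notin> set C'"
proof (rule ccontr)
  assume "\<not> ?thesis"
  then have "X \<subseteq> (set C \<union> set C') \<inter> {x. isl x = b}" using assms(3) by auto
  then have "card X \<le> card ((set C \<union> set C') \<inter> {x. isl x = b})" by (intro card_mono) auto
  with side_card[OF assms(1), of b] assms(2) show False by simp
qed

lemma few_never_clear:
  assumes "k < p" "p \<le> q"
  shows "length C = k \<Longrightarrow> set C \<subseteq> Kpq_V p q \<Longrightarrow> Kpq_V p q - set C \<subseteq> D \<Longrightarrow> \<not> clr (Kpq_V p q) Kpq_E n C D"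
proof (induction n arbitrary: C D)
  case 0
  have "card (set C) < card (Kpq_V p q)" using 0 assms cardV[of p q]
    by (metis add_increasing2 card_length le_eq_less_or_eq order_le_less_trans zero_le)
  then have "\<not> Kpq_V p q \<subseteq> set C" by (meson List.finite_set card_mono not_le)
  then show ?case using 0 by auto
next
  case (Suc n)
  have "card (set C) < card (Kpq_V p q)" using Suc.prems assms cardV[of p q]
    by (metis add_increasing2 card_length le_eq_less_or_eq order_le_less_trans zero_le)
  then have "\<not> Kpq_V p q \<subseteq> set C" by (meson List.finite_set card_mono not_le)
  then have Dne: "D \<noteq> {}" using Suc.prems by auto
  have "\<not> clr (Kpq_V p q) Kpq_E n C' (nxt (Kpq_V p q) Kpq_E D (set C'))" if cm: "cmove (Kpq_V p q) Kpq_E C C'" for C'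
  proof (rule Suc.IH)
    show "length C' = k" using cm Suc.prems by (simp add: cmove_def)
    show "set C' \<subseteq> Kpq_V p q" using cm by (auto simp: cmove_def in_set_conv_nth)
    obtain l where l: "l \<in> LL p" "l \<notin> set C" "l \<notin> set C'"
      using side_free[OF cm _ LL_side[of p] finLL] Suc.prems assms cardLL[of p] by auto
    obtain r where r: "r \<in> RR q" "r \<notin> set C" "r \<notin> set C'"
      using side_free[OF cm _ RR_side[of q] finRR] Suc.prems assms cardRR[of q] by auto
    have lD: "l \<in> D" and rD: "r \<in> D" using l r Suc.prems(3) V_LR by auto
    show "Kpq_V p q - set C' \<subseteq> nxt (Kpq_V p q) Kpq_E D (set C')"
    proof
      fix u assume u: "u \<in> Kpq_V p q - set C'"
      show "u \<in> nxt (Kpq_V p q) Kpq_E D (set C')"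
      proof (cases "isl u")
        case True
        have "\<not> isl r" using r by (auto simp: RR_def)
        then show ?thesis using u True rD r by (auto simp: nxt_def E_iff)
      next
        case False
        have "isl l" using l by (auto simp: LL_def)
        then show ?thesis using u False lD l by (auto simp: nxt_def E_iff)
      qed
    qed
  qed
  then show ?case using Dne by simp
qed

lemma other_vertex:
  assumes "2 \<le> p" "p \<le> q" "x \<in> Kpq_V p q"
  shows "\<exists>w\<in>Kpq_V p q. isl w = isl x \<and> w \<noteq> x"
proof (cases x)
  case (Inl i)
  then show ?thesis using assms
    by (rule_tac x="Inl (if i = 0 then 1 else 0)" in bexI) (auto simp: memV)
next
  case (Inr i)
  then show ?thesis using assms
    by (rule_tac x="Inr (if i = 0 then 1 else 0)" in bexI) (auto simp: memV)
qed

lemma capture_single: "capture [c] [Some v] = (if v = c then [None] else [Some v])"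
  by (simp add: capture_def)

lemma one_cop_evade:
  assumes "2 \<le> p" "p \<le> q"
  shows "c \<in> Kpq_V p q \<Longrightarrow> v \<in> Kpq_V p q \<Longrightarrow> isl c = isl v \<Longrightarrow> c \<noteq> v \<Longrightarrow>
    \<not> cops_win_within (Kpq_V p q) Kpq_E n [c] [Some v]"
proof (induction n arbitrary: c v)
  case 0
  then show ?case by (simp add: all_caught_def)
next
  case (Suc n)
  show ?case
  proof
    assume "cops_win_within (Kpq_V p q) Kpq_E (Suc n) [c] [Some v]"
    then obtain C' where cm: "cmove (Kpq_V p q) Kpq_E [c] C'" and
      win: "\<And>R'. rmove (Kpq_V p q) Kpq_E (capture C' [Some v]) R' \<Longrightarrow>
          cops_win_within (Kpq_V p q) Kpq_E n C' (capture C' R')"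
      by (auto simp: all_caught_def)
    from cm obtain c' where C': "C' = [c']" and c'V: "c' \<in> Kpq_V p q" and cc': "c' = c \<or> isl c \<noteq> isl c'"
      by (cases C') (auto simp: cmove_def E_iff)
    have vc': "v \<noteq> c'" using cc' Suc.prems by auto
    obtain w where wV: "w \<in> Kpq_V p q" and wc: "isl w = isl c'" "w \<noteq> c'" and vw: "w = v \<or> isl v \<noteq> isl w"
    proof (cases "c' = c")
      case True
      then show ?thesis using that Suc.prems by auto
    next
      case False
      obtain w where "w \<in> Kpq_V p q" "isl w = isl c'" "w \<noteq> c'" using other_vertex[OF assms c'V] by auto
      then show ?thesis using that False cc' Suc.prems by auto
    qed
    have rm: "rmove (Kpq_V p q) Kpq_E (capture C' [Some v]) [Some w]"
      using vc' wV vw by (simp add: C' capture_single rmove_def E_iff)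
    have "cops_win_within (Kpq_V p q) Kpq_E n [c'] [Some w]"
      using win[OF rm] wc by (simp add: C' capture_single)
    with Suc.IH[OF c'V wV] wc show False by auto
  qed
qed

lemma one_cop_not_win:
  assumes "2 \<le> p" "p \<le> q"
  shows "\<not> cop_win (Kpq_V p q) Kpq_E 1"
proof
  assume "cop_win (Kpq_V p q) Kpq_E 1"
  then obtain t C0 where C0: "length C0 = 1" "set C0 \<subseteq> Kpq_V p q" and
    win: "\<And>R0. length R0 = 1 \<and> set R0 \<subseteq> Kpq_V p q \<Longrightarrow>
       cops_win_within (Kpq_V p q) Kpq_E t C0 (capture C0 (map Some R0))"
    unfolding cop_win_def capt_bound_def by blast
  from C0 obtain c where c: "C0 = [c]" "c \<in> Kpq_V p q"
    by (cases C0) auto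
  obtain v where v: "v \<in> Kpq_V p q" "isl v = isl c" "v \<noteq> c" using other_vertex[OF assms c(2)] by auto
  have "cops_win_within (Kpq_V p q) Kpq_E t [c] [Some v]"
    using win[of "[v]"] v c by (simp add: capture_single)
  with one_cop_evade[OF assms c(2) v(1)] v show False by auto
qed

definition live :: "'v option list \<Rightarrow> nat set" where
  "live R = {i. i < length R \<and> R ! i \<noteq> None}"

lemma finite_live: "finite (live R)" by (simp add: live_def)

lemma live_capture: "live (capture C R) \<subseteq> live R"
  by (auto simp: live_def capture_nth split: option.splits)

lemma live_capture_less:
  assumes "j < length R" "R ! j = Some v" "v \<in> set C"
  shows "live (capture C R) \<subset> live R"
proof -
  have "j \<in> live R" using assms by (simp add: live_def)
  moreover have "j \<notin> live (capture C R)" using assms by (simp add: live_def capture_nth)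
  ultimately show ?thesis using live_capture by blast
qed

lemma live_rmove: "rmove V E R R' \<Longrightarrow> live R' = live R"
  unfolding rmove_def live_def
  by (auto split: option.splits)

lemma rmove_pos: "rmove V E R R' \<Longrightarrow> i < length R' \<Longrightarrow> R' ! i = Some w \<Longrightarrow> w \<in> V"
  unfolding rmove_def by (cases "R ! i") (auto elim!: allE[of _ i])

lemma all_caught_live: "all_caught R \<longleftrightarrow> live R = {}"
  by (auto simp: all_caught_nth live_def)

abbreviation posV :: "'v set \<Rightarrow> 'v option list \<Rightarrow> bool" where
  "posV V R \<equiv> (\<forall>i<length R. \<forall>v. R ! i = Some v \<longrightarrow> v \<in> V)"

lemma posV_capture_rmove: "rmove V E (capture C R) R' \<Longrightarrow> posV V (capture C' R')"
  by (metis capture_Some capture_length rmove_pos)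

lemma catch_step:
  assumes IH: "\<And>C R. length C = k \<Longrightarrow> set C \<subseteq> Kpq_V p q \<Longrightarrow> posV (Kpq_V p q) R \<Longrightarrow> card (live R) \<le> n
      \<Longrightarrow> cops_win_within (Kpq_V p q) Kpq_E (2*n) C R"
    and C: "length C = k" "set C \<subseteq> Kpq_V p q" and RV: "posV (Kpq_V p q) R" and lR: "card (live R) \<le> Suc n"
    and i: "i < length C" and j: "j < length R" "R ! j = Some v" and side: "isl v \<noteq> isl (C ! i)"
  shows "cops_win_within (Kpq_V p q) Kpq_E (Suc (2*n)) C R"
proof -
  define C' where "C' = C[i := v]"
  have vV: "v \<in> Kpq_V p q" using RV j by auto
  have cm: "cmove (Kpq_V p q) Kpq_E C C'"
    unfolding cmove_def C'_def using C i vV side nth_mem[of _ C]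
    by (auto simp: nth_list_update E_iff) (meson nth_mem subsetD)+
  have vC': "v \<in> set C'" using i by (simp add: C'_def set_update_memI)
  have "cops_win_within (Kpq_V p q) Kpq_E (2*n) C' (capture C' R')"
    if rm: "rmove (Kpq_V p q) Kpq_E (capture C' R) R'" for R'
  proof (rule IH)
    show "length C' = k" using C by (simp add: C'_def)
    show "set C' \<subseteq> Kpq_V p q" using C vV by (simp add: C'_def) (meson insert_subset set_update_subset_insert subset_trans)
    show "posV (Kpq_V p q) (capture C' R')" by (rule posV_capture_rmove[OF rm])
    have "live (capture C' R') \<subseteq> live (capture C' R)"
      using live_capture[of C' R'] live_rmove[OF rm] by simp
    moreover have "live (capture C' R) \<subset> live R" by (rule live_capture_less[OF j vC'])
    ultimately have "live (capture C' R') \<subset> live R" by blast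
    then have "card (live (capture C' R')) < card (live R)" by (simp add: finite_live psubset_card_mono)
    then show "card (live (capture C' R')) \<le> n" using lR by simp
  qed
  then show ?thesis using cm by auto
qed

lemma two_cops_win:
  assumes "1 \<le> p" "p \<le> q" "2 \<le> k"
  shows "length C = k \<Longrightarrow> set C \<subseteq> Kpq_V p q \<Longrightarrow> posV (Kpq_V p q) R \<Longrightarrow> card (live R) \<le> n
      \<Longrightarrow> cops_win_within (Kpq_V p q) Kpq_E (2*n) C R"
proof (induction n arbitrary: C R)
  case 0
  then have "live R = {}" by (simp add: finite_live)
  then show ?case by (simp add: all_caught_live)
next
  case (Suc n)
  note IH = Suc.IH
  show ?case
  proof (cases "all_caught R")
    case True
    then show ?thesis by simp
  next
    case False
    then obtain j v where j: "j < length R" "R ! j = Some v"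
      by (auto simp: all_caught_nth)
    show ?thesis
    proof (cases "\<exists>i<length C. \<exists>j<length R. \<exists>v. R ! j = Some v \<and> isl v \<noteq> isl (C ! i)")
      case True
      then obtain i j v where "i<length C" "j<length R" "R ! j = Some v" "isl v \<noteq> isl (C ! i)" by blast
      then have "cops_win_within (Kpq_V p q) Kpq_E (Suc (2*n)) C R"
        using catch_step[OF IH Suc.prems(1-4)] by blast
      moreover have "2 * Suc n = Suc (Suc (2*n))" by simp
      ultimately show ?thesis using cww_Suc by metis
    next
      case False
      then have allside: "\<And>i. i < length C \<Longrightarrow> isl (C ! i) = isl v" using j by metis
      define w :: "nat + nat" where "w = (if isl v then Inr 0 else Inl 0)"
      have wV: "w \<in> Kpq_V p q" using assms by (simp add: w_def memV)
      have wside: "isl w \<noteq> isl v" by (simp add: w_def)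
      define C' where "C' = C[0 := w]"
      have k0: "0 < length C" "1 < length C" using Suc.prems assms by auto
      have cm: "cmove (Kpq_V p q) Kpq_E C C'"
        unfolding cmove_def C'_def using Suc.prems(2) k0 wV wside allside[of 0] nth_mem[of _ C]
        by (auto simp: nth_list_update E_iff) (meson nth_mem subsetD)+
      have C'side: "isl (C' ! 0) \<noteq> isl (C' ! 1)"
        using k0 allside[of 1] wside by (simp add: C'_def)
      have "cops_win_within (Kpq_V p q) Kpq_E (Suc (2*n)) C' (capture C' R')"
        if rm: "rmove (Kpq_V p q) Kpq_E (capture C' R) R'" for R'
      proof -
        define R2 where "R2 = capture C' R'"
        have lC': "length C' = k" using Suc.prems by (simp add: C'_def)
        have sC': "set C' \<subseteq> Kpq_V p q" using Suc.prems(2) wV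
          by (simp add: C'_def) (meson insert_subset set_update_subset_insert subset_trans)
        have pR2: "posV (Kpq_V p q) R2" unfolding R2_def by (rule posV_capture_rmove[OF rm])
        have "live R2 \<subseteq> live R"
          using live_capture[of C' R'] live_rmove[OF rm] live_capture[of C' R] by (simp add: R2_def)
        then have lR2: "card (live R2) \<le> Suc n"
          using Suc.prems(4) by (meson card_mono finite_live le_trans)
        show ?thesis
        proof (cases "all_caught R2")
          case True
          then show ?thesis by (simp add: R2_def)
        next
          case False
          then obtain j' u where j': "j' < length R2" "R2 ! j' = Some u"
            by (auto simp: all_caught_nth)
          obtain i where i: "i < length C'" "isl u \<noteq> isl (C' ! i)"
          proof (cases "isl u = isl (C' ! 0)")
            case True
            then show ?thesis using that[of 1] C'side k0 by (auto simp: C'_def)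
          next
            case False
            then show ?thesis using that[of 0] k0 by (auto simp: C'_def)
          qed
          show ?thesis
            using catch_step[OF IH lC' sC' pR2 lR2 i(1) j' i(2)] by (simp add: R2_def)
        qed
      qed
      note W = this
      have eq: "2 * Suc n = Suc (Suc (2*n))" by simp
      show ?thesis unfolding eq
        by (subst cops_win_within.simps(2), rule disjI2, rule exI[of _ C'], use cm W in blast)
    qed
  qed
qed

lemma two_cops_bound:
  assumes "1 \<le> p" "p \<le> q" "2 \<le> k"
  shows "capt_bound (Kpq_V p q) Kpq_E k m (2*m)"
  unfolding capt_bound_def
proof (intro exI[of _ "replicate k (Inl 0)"] conjI allI impI)
  show "length (replicate k (Inl 0 :: nat + nat)) = k" by simp
  show "set (replicate k (Inl 0)) \<subseteq> Kpq_V p q" using assms by (auto simp: memV)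
  fix R0 :: "(nat + nat) list" assume R0: "length R0 = m \<and> set R0 \<subseteq> Kpq_V p q"
  show "cops_win_within (Kpq_V p q) Kpq_E (2 * m) (replicate k (Inl 0)) (capture (replicate k (Inl 0)) (map Some R0))"
  proof (rule two_cops_win[OF assms])
    show "length (replicate k (Inl 0 :: nat + nat)) = k" by simp
    show "set (replicate k (Inl 0)) \<subseteq> Kpq_V p q" using assms by (auto simp: memV)
    show "posV (Kpq_V p q) (capture (replicate k (Inl 0)) (map Some R0))"
      using R0 by (auto simp: capture_Some nth_mem subset_iff)
    have "live (capture (replicate k (Inl 0)) (map Some R0)) \<subseteq> {..<m}"
      using R0 by (auto simp: live_def)
    then show "card (live (capture (replicate k (Inl 0)) (map Some R0))) \<le> m"
      by (metis card_lessThan card_mono finite_lessThan)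
  qed
qed



definition CL :: "nat \<Rightarrow> (nat + nat) list" where "CL p = map Inl [0..<p]"
definition blk :: "nat \<Rightarrow> nat \<Rightarrow> nat \<Rightarrow> (nat + nat) list" where
  "blk p q a = map (\<lambda>i. Inr (min (a+i) (q-1))) [0..<p]"
definition Rset :: "nat \<Rightarrow> nat \<Rightarrow> (nat + nat) set" where
  "Rset q a = {Inr i | i. a \<le> i \<and> i < q}"

lemma set_CL: "set (CL p) = LL p" by (auto simp: CL_def LL_def)

lemma cm_L_blk: "1 \<le> q \<Longrightarrow> cmove (Kpq_V p q) Kpq_E (CL p) (blk p q a)"
  by (auto simp: cmove_def CL_def blk_def memV E_iff)

lemma cm_blk_L: "cmove (Kpq_V p q) Kpq_E (blk p q a) (CL p)"
  by (auto simp: cmove_def CL_def blk_def memV E_iff)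

lemma notblk: "i < q \<Longrightarrow> a \<le> i \<Longrightarrow> Inr i \<notin> set (blk p q a) \<Longrightarrow> a + p \<le> i"
proof (rule ccontr)
  assume i: "i < q" "a \<le> i" "Inr i \<notin> set (blk p q a)" "\<not> a + p \<le> i"
  then have "i - a \<in> {0..<p}" by auto
  moreover have "Inr (min (a + (i - a)) (q-1)) = (Inr i :: nat + nat)" using i by auto
  ultimately have "Inr i \<in> set (blk p q a)" unfolding blk_def by (metis (no_types, lifting) image_eqI set_map set_upt)
  with i show False by simp
qed

lemma nxt_blk_empty:
  assumes "q \<le> a + p"
  shows "nxt (Kpq_V p q) Kpq_E (Rset q a) (set (blk p q a)) = {}"
  using notblk[of _ q a p] assms by (fastforce simp: nxt_def Rset_def)

lemma nxt_two:
  "nxt (Kpq_V p q) Kpq_E (nxt (Kpq_V p q) Kpq_E (Rset q a) (set (blk p q a))) (set (CL p)) \<subseteq> Rset q (a + p)"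
proof
  fix u assume u: "u \<in> nxt (Kpq_V p q) Kpq_E (nxt (Kpq_V p q) Kpq_E (Rset q a) (set (blk p q a))) (set (CL p))"
  then obtain v where uV: "u \<in> Kpq_V p q" "u \<notin> LL p" and
    v: "v \<in> nxt (Kpq_V p q) Kpq_E (Rset q a) (set (blk p q a))" "v \<notin> LL p" "u = v \<or> Kpq_E v u"
    by (auto simp: nxt_def set_CL)
  from v(1) obtain x where vV: "v \<in> Kpq_V p q" and x: "x \<in> Rset q a" "x \<notin> set (blk p q a)" "v = x \<or> Kpq_E x v"
    by (auto simp: nxt_def)
  have "\<not> isl v" using vV v(2) inV_isl by blast
  have "\<not> isl u" using uV inV_isl by blast
  have "u = v" using v(3) \<open>\<not> isl v\<close> \<open>\<not> isl u\<close> by (auto simp: E_iff)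
  have "\<not> isl x" using x(1) by (auto simp: Rset_def)
  have "v = x" using x(3) \<open>\<not> isl v\<close> \<open>\<not> isl x\<close> by (auto simp: E_iff)
  obtain i where "x = Inr i" "a \<le> i" "i < q" using x(1) by (auto simp: Rset_def)
  then have "a + p \<le> i" using notblk x(2) by blast
  then show "u \<in> Rset q (a + p)" using \<open>u = v\<close> \<open>v = x\<close> \<open>x = Inr i\<close> \<open>i < q\<close> by (auto simp: Rset_def)
qed

lemma sweep:
  assumes "1 \<le> q"
  shows "q \<le> a + (j+1)*p \<Longrightarrow> clr (Kpq_V p q) Kpq_E (2*j+1) (CL p) (Rset q a)"
proof (induction j arbitrary: a)
  case 0
  then have "nxt (Kpq_V p q) Kpq_E (Rset q a) (set (blk p q a)) = {}" using nxt_blk_empty by simp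
  then show ?case using cm_L_blk[OF assms] by (auto intro!: exI[of _ "blk p q a"])
next
  case (Suc j)
  have "clr (Kpq_V p q) Kpq_E (2*j+1) (CL p) (Rset q (a+p))" using Suc.IH[of "a+p"] Suc.prems by (simp add: algebra_simps)
  then have c1: "clr (Kpq_V p q) Kpq_E (2*j+1) (CL p)
     (nxt (Kpq_V p q) Kpq_E (nxt (Kpq_V p q) Kpq_E (Rset q a) (set (blk p q a))) (set (CL p)))"
    using clr_monoD nxt_two by blast
  have c2: "clr (Kpq_V p q) Kpq_E (Suc (2*j+1)) (blk p q a) (nxt (Kpq_V p q) Kpq_E (Rset q a) (set (blk p q a)))"
    using c1 cm_blk_L by auto
  have "clr (Kpq_V p q) Kpq_E (Suc (Suc (2*j+1))) (CL p) (Rset q a)"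
    using c2 cm_L_blk[OF assms] by (subst clr.simps(2)) blast
  then show ?case by (simp add: algebra_simps)
qed

lemma upper_eq:
  assumes "1 \<le> p" "p = q"
  shows "clr (Kpq_V p q) Kpq_E 1 (blk p q 0) (Kpq_V p q - set (blk p q 0))"
proof -
  have "nxt (Kpq_V p q) Kpq_E (Kpq_V p q - set (blk p q 0)) (set (CL p)) = {}"
  proof (rule ccontr)
    assume "\<not> ?thesis"
    then obtain v where v: "v \<in> Kpq_V p q" "v \<notin> set (blk p q 0)" "v \<notin> LL p"
      by (auto simp: nxt_def set_CL)
    then obtain i where "v = Inr i" "i < q" using inV_isl inV_nisl by (cases v) (auto simp: memV)
    then show False using notblk[of i q 0 p] v assms by auto
  qed
  then show ?thesis using cm_blk_L by (auto intro!: exI[of _ "CL p"])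
qed

lemma upper_gt:
  assumes "1 \<le> p" "p < q" "2 \<le> s" "q \<le> p * s"
  shows "clr (Kpq_V p q) Kpq_E (2*s-2) (blk p q 0) (Kpq_V p q - set (blk p q 0))"
proof -
  have sub: "nxt (Kpq_V p q) Kpq_E (Kpq_V p q - set (blk p q 0)) (set (CL p)) \<subseteq> Rset q p"
  proof
    fix u assume "u \<in> nxt (Kpq_V p q) Kpq_E (Kpq_V p q - set (blk p q 0)) (set (CL p))"
    then obtain v where uV: "u \<in> Kpq_V p q" "u \<notin> LL p" and v: "v \<in> Kpq_V p q" "v \<notin> set (blk p q 0)" "v \<notin> LL p" "u = v \<or> Kpq_E v u"
      by (auto simp: nxt_def set_CL)
    have "\<not> isl v" using v inV_isl by blast
    have "\<not> isl u" using uV inV_isl by blast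
    have "u = v" using v(4) \<open>\<not> isl v\<close> \<open>\<not> isl u\<close> by (auto simp: E_iff)
    obtain i where "v = Inr i" "i < q" using v(1) \<open>\<not> isl v\<close> by (cases v) (auto simp: memV)
    then have "p \<le> i" using notblk[of i q 0 p] v by auto
    then show "u \<in> Rset q p" using \<open>u = v\<close> \<open>v = Inr i\<close> \<open>i < q\<close> by (auto simp: Rset_def)
  qed
  have "q \<le> p + (s - 2 + 1) * p" using assms by (simp add: algebra_simps)
  then have "clr (Kpq_V p q) Kpq_E (2*(s-2)+1) (CL p) (Rset q p)" using sweep assms by simp
  then have "clr (Kpq_V p q) Kpq_E (2*(s-2)+1) (CL p) (nxt (Kpq_V p q) Kpq_E (Kpq_V p q - set (blk p q 0)) (set (CL p)))"
    using clr_monoD sub by blast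
  then have "clr (Kpq_V p q) Kpq_E (Suc (2*(s-2)+1)) (blk p q 0) (Kpq_V p q - set (blk p q 0))"
    using cm_blk_L by auto
  moreover have "Suc (2*(s-2)+1) = 2*s-2" using assms by simp
  ultimately show ?thesis by metis
qed

abbreviation VV where "VV p q \<equiv> Kpq_V p q"

definition LFst :: "nat \<Rightarrow> nat \<Rightarrow> nat \<Rightarrow> nat \<Rightarrow> (nat + nat) list \<Rightarrow> (nat + nat) set \<Rightarrow> bool" where
  "LFst p q s n C D \<longleftrightarrow> LL p - set C \<subseteq> D \<and> n + 3 \<le> 2*s \<and>
     card (RR q - D) + p * (n div 2) \<le> p * (s - 1) \<and>
     card (RR q - D) + card (LL p \<inter> set C) + p * ((n+1) div 2) \<le> p * s"

definition RFst :: "nat \<Rightarrow> nat \<Rightarrow> nat \<Rightarrow> nat \<Rightarrow> (nat + nat) list \<Rightarrow> (nat + nat) set \<Rightarrow> bool" where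
  "RFst p q s n C D \<longleftrightarrow> RR q - set C \<subseteq> D \<and> (\<exists>l\<in>LL p. l \<in> D \<and> l \<notin> set C) \<and> n + 4 \<le> 2*s"

lemma arith_fresh:
  fixes d c p n s :: nat
  assumes "d \<le> p" "c \<le> p" "(d + c \<le> p \<and> n + 4 \<le> 2*s) \<or> n + 5 \<le> 2*s"
  shows "d + p * (n div 2) \<le> p * (s - 1) \<and> d + c + p * ((n+1) div 2) \<le> p * s"
proof -
  have n4: "n + 4 \<le> 2*s" using assms(3) by auto
  have h1: "n div 2 + 1 \<le> s - 1" using n4 by linarith
  have "p * (n div 2 + 1) \<le> p * (s - 1)" using h1 by (rule mult_le_mono2)
  then have A: "d + p * (n div 2) \<le> p * (s - 1)" using assms(1) by (simp add: algebra_simps)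
  have B: "d + c + p * ((n+1) div 2) \<le> p * s"
  proof (cases "d + c \<le> p \<and> n + 4 \<le> 2*s")
    case True
    have "(n+1) div 2 + 1 \<le> s" using True by linarith
    then have "p * ((n+1) div 2 + 1) \<le> p * s" by (rule mult_le_mono2)
    then show ?thesis using True by (simp add: algebra_simps)
  next
    case False
    then have n5: "n + 5 \<le> 2*s" using assms(3) by auto
    have "(n+1) div 2 + 2 \<le> s" using n5 by linarith
    then have "p * ((n+1) div 2 + 2) \<le> p * s" by (rule mult_le_mono2)
    then show ?thesis using assms(1,2) by (simp add: algebra_simps)
  qed
  show ?thesis using A B by simp
qed

lemma card_sides:
  assumes "length C = p"
  shows "card (RR q \<inter> set C) + card (LL p \<inter> set C) \<le> p"
proof -
  have "card (RR q \<inter> set C) + card (LL p \<inter> set C) = card ((RR q \<inter> set C) \<union> (LL p \<inter> set C))"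
    by (rule card_Un_disjoint[symmetric]) (auto simp: RR_def LL_def)
  also have "\<dots> \<le> card (set C)" by (intro card_mono) auto
  also have "\<dots> \<le> p" using assms card_length by metis
  finally show ?thesis .
qed

lemma card_RR_le: "card (RR q \<inter> X) \<le> card (RR q)"
  by (intro card_mono) (auto simp: finRR)

lemma lower_main:
  assumes pq: "p < q" and p1: "1 \<le> p" and sq: "p * (s - 1) < q" and s2: "2 \<le> s"
  shows "length C = p \<Longrightarrow> set C \<subseteq> VV p q \<Longrightarrow> D \<subseteq> VV p q \<Longrightarrow>
     LFst p q s n C D \<or> RFst p q s n C D \<Longrightarrow> \<not> clr (VV p q) Kpq_E n C D"
proof (induction n arbitrary: C D)
  case 0
  show ?case
  proof (cases "LFst p q s 0 C D")
    case True
    then have "card (RR q - D) < card (RR q)" using sq by (simp add: LFst_def cardRR)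
    then have "D \<noteq> {}" by auto
    then show ?thesis by simp
  next
    case False
    then show ?thesis using 0 by (auto simp: RFst_def)
  qed
next
  case (Suc n)
  note lenC = Suc.prems(1) and CV = Suc.prems(2) and DV = Suc.prems(3)
  have Dne: "D \<noteq> {}"
  proof (cases "LFst p q s (Suc n) C D")
    case True
    then have "card (RR q - D) \<le> p * (s - 1)" by (simp add: LFst_def)
    then have "card (RR q - D) < card (RR q)" using sq by (simp add: cardRR)
    then show "D \<noteq> {}" by auto
  next
    case False
    then show ?thesis using Suc.prems(4) by (auto simp: RFst_def)
  qed
  have step: "LFst p q s n C' (nxt (VV p q) Kpq_E D (set C')) \<or> RFst p q s n C' (nxt (VV p q) Kpq_E D (set C'))"
    if cm: "cmove (VV p q) Kpq_E C C'" for C'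
  proof -
    define S where "S = set C"
    define S' where "S' = set C'"
    define D' where "D' = nxt (VV p q) Kpq_E D S'"
    have lenC': "length C' = p" using cm lenC by (simp add: cmove_def)
    have cs': "card (RR q \<inter> S') + card (LL p \<inter> S') \<le> p" using card_sides[OF lenC'] by (simp add: S'_def)
    have cs: "card (RR q \<inter> S) + card (LL p \<inter> S) \<le> p" using card_sides[OF lenC] by (simp add: S_def)
    have inD': "\<And>u v. u \<in> VV p q \<Longrightarrow> u \<notin> S' \<Longrightarrow> v \<in> D \<Longrightarrow> v \<notin> S' \<Longrightarrow> u = v \<or> isl u \<noteq> isl v \<Longrightarrow> u \<in> D'"
      by (auto simp: D'_def nxt_def E_iff)
    have LLV: "LL p \<subseteq> VV p q" and RRV: "RR q \<subseteq> VV p q" by (auto simp: V_LR)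
    have isLL: "\<And>x. x \<in> LL p \<Longrightarrow> isl x" and isRR: "\<And>x. x \<in> RR q \<Longrightarrow> \<not> isl x"
      by (auto simp: LL_def RR_def)
    have fresh: "LFst p q s n C' D'" if LD: "LL p - S' \<subseteq> D'" and dp: "card (RR q - D') \<le> p"
      and side: "(card (RR q - D') + card (LL p \<inter> S') \<le> p \<and> n + 4 \<le> 2*s) \<or> n + 5 \<le> 2*s" for dummy :: bool
    proof -
      have "card (LL p \<inter> S') \<le> p" using cs' by simp
      then show ?thesis using arith_fresh[OF dp _ side] LD side by (auto simp: LFst_def S'_def)
    qed
    show ?thesis
    proof (cases "LFst p q s (Suc n) C D")
      case LF: True
      then have LS: "LL p - S \<subseteq> D" and n3: "Suc n + 3 \<le> 2*s"
        and H1: "card (RR q - D) + p * ((n+1) div 2) \<le> p * (s - 1)"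
        and H2: "card (RR q - D) + card (LL p \<inter> S) + p * (n div 2 + 1) \<le> p * s"
        by (auto simp: LFst_def S_def)
      define d where "d = card (RR q - D)"
      define c where "c = card (LL p \<inter> S)"
      define x where "x = card (RR q \<inter> S')"
      define c' where "c' = card (LL p \<inter> S')"
      have ps: "p * s = p * (s - 1) + p" using s2 by (cases s) auto
      have pn: "p * (n div 2 + 1) = p * (n div 2) + p" by simp
      show ?thesis
      proof (cases "\<exists>l\<in>LL p. l \<in> D \<and> l \<notin> S'")
        case False
        then have "LL p - S \<subseteq> LL p \<inter> S'" using LS by auto
        then have "card (LL p - S) \<le> c'" unfolding c'_def by (intro card_mono) (auto simp: finLL)
        moreover have "card (LL p - S) = p - c" unfolding c_def
          by (simp add: card_Diff_subset_Int finLL cardLL)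
        moreover have "c \<le> p" using cs by (simp add: c_def)
        ultimately have xc: "x \<le> c" using cs' by (simp add: x_def c'_def)
        have "\<exists>r\<in>RR q. r \<in> D \<and> r \<notin> S'"
        proof (rule ccontr)
          assume "\<not> ?thesis"
          then have "RR q \<inter> D \<subseteq> RR q \<inter> S'" by auto
          then have "card (RR q \<inter> D) \<le> x" unfolding x_def by (intro card_mono) (auto simp: finRR)
          moreover have "card (RR q) = card (RR q - D) + card (RR q \<inter> D)"
            by (metis Int_commute add.commute card_Diff_subset_Int card_RR_le finRR finite_Int le_add_diff_inverse2 inf_commute)
          ultimately have "q \<le> d + c" using xc by (simp add: d_def cardRR)
          moreover have "d + c + p * (n div 2) + p \<le> p * s" using H2 by (simp add: d_def c_def pn)
          ultimately show False using sq ps by linarith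
        qed
        then obtain r where r: "r \<in> RR q" "r \<in> D" "r \<notin> S'" by auto
        have LD: "LL p - S' \<subseteq> D'"
          using r LLV isLL isRR by (intro subsetI inD'[of _ r]) auto
        have "RR q - D' \<subseteq> (RR q - D) \<union> (RR q \<inter> S')"
          using RRV inD' by blast
        then have "card (RR q - D') \<le> card ((RR q - D) \<union> (RR q \<inter> S'))" by (intro card_mono) (auto simp: finRR)
        also have "\<dots> \<le> d + x" unfolding d_def x_def by (rule card_Un_le)
        finally have dd: "card (RR q - D') \<le> d + x" .
        have "LFst p q s n C' D'"
          unfolding LFst_def
        proof (intro conjI)
          show "LL p - set C' \<subseteq> D'" using LD by (simp add: S'_def)
          show "n + 3 \<le> 2 * s" using n3 by simp
          have "d + c + p * (n div 2) + p \<le> p * s" using H2 by (simp add: d_def c_def pn)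
          then show "card (RR q - D') + p * (n div 2) \<le> p * (s - 1)" using dd xc ps by linarith
          have "x + c' \<le> p" using cs' by (simp add: x_def c'_def)
          moreover have "d + p * ((n+1) div 2) \<le> p * (s - 1)" using H1 by (simp add: d_def)
          ultimately show "card (RR q - D') + card (LL p \<inter> set C') + p * ((n + 1) div 2) \<le> p * s"
            using dd ps by (simp add: c'_def S'_def)
        qed
        then show ?thesis by (simp add: D'_def S'_def)
      next
        case True
        then obtain l where l: "l \<in> LL p" "l \<in> D" "l \<notin> S'" by auto
        show ?thesis
        proof (cases "\<exists>r\<in>RR q. r \<in> D \<and> r \<notin> S'")
          case True
          then obtain r where r: "r \<in> RR q" "r \<in> D" "r \<notin> S'" by auto
          have full: "VV p q - S' \<subseteq> D'"
          proof
            fix u assume u: "u \<in> VV p q - S'"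
            show "u \<in> D'"
            proof (cases "isl u")
              case True
              then show ?thesis using u r isRR by (intro inD'[of _ r]) auto
            next
              case False
              then show ?thesis using u l isLL by (intro inD'[of _ l]) auto
            qed
          qed
          have "RR q - D' \<subseteq> RR q \<inter> S'" using full RRV by blast
          then have dx: "card (RR q - D') \<le> x" unfolding x_def by (intro card_mono) (auto simp: finRR)
          have "LFst p q s n C' D'"
            by (rule fresh) (use full LLV dx cs' n3 in \<open>auto simp: x_def\<close>)
          then show ?thesis by (simp add: D'_def S'_def)
        next
          case False
          have "RFst p q s n C' D'"
            unfolding RFst_def
          proof (intro conjI)
            show "RR q - set C' \<subseteq> D'"
              using l LLV isLL isRR RRV by (auto intro!: inD'[of _ l] simp: S'_def)
            show "\<exists>l\<in>LL p. l \<in> D' \<and> l \<notin> set C'"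
              using l LLV by (auto intro!: bexI[of _ l] inD'[of _ l] simp: S'_def)
            show "n + 4 \<le> 2 * s" using n3 by simp
          qed
          then show ?thesis by (simp add: D'_def S'_def)
        qed
      qed
    next
      case False
      then have RF: "RFst p q s (Suc n) C D" using Suc.prems(4) by simp
      then have RS: "RR q - S \<subseteq> D" and n4: "Suc n + 4 \<le> 2*s"
        by (auto simp: RFst_def S_def)
      obtain l where l: "l \<in> LL p" "l \<in> D" "l \<notin> S" using RF by (auto simp: RFst_def S_def)
      obtain r where r: "r \<in> RR q" "r \<notin> S" "r \<notin> S'"
        using side_free[OF cm _ RR_side[of q] finRR] lenC pq cardRR[of q] by (auto simp: S_def S'_def)
      have rD: "r \<in> D" using r RS by auto
      have LD: "LL p - S' \<subseteq> D'"
        using r rD LLV isLL isRR by (intro subsetI inD'[of _ r]) auto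
      have "RR q - D' \<subseteq> RR q \<inter> (S \<union> S')"
      proof
        fix u assume u: "u \<in> RR q - D'"
        show "u \<in> RR q \<inter> (S \<union> S')"
        proof (rule ccontr)
          assume "u \<notin> RR q \<inter> (S \<union> S')"
          then have "u \<in> D" "u \<notin> S'" using u RS by auto
          then have "u \<in> D'" using u RRV by (intro inD'[of _ u]) auto
          with u show False by simp
        qed
      qed
      moreover have fin: "finite ((S \<union> S') \<inter> {x. isl x = False})" unfolding S_def S'_def by simp
      ultimately have "card (RR q - D') \<le> card ((S \<union> S') \<inter> {x. isl x = False})"
        using RR_side[of q] fin by (intro card_mono) auto
      also have "\<dots> \<le> p" using side_card[OF cm, of False] lenC by (simp add: S_def S'_def)
      finally have dp: "card (RR q - D') \<le> p" .
      have "LFst p q s n C' D'" by (rule fresh) (use LD dp n4 in auto)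
      then show ?thesis by (simp add: D'_def S'_def)
    qed
  qed
  have "\<not> clr (VV p q) Kpq_E n C' (nxt (VV p q) Kpq_E D (set C'))" if cm: "cmove (VV p q) Kpq_E C C'" for C'
  proof (rule Suc.IH)
    show "length C' = p" using cm lenC by (simp add: cmove_def)
    show "set C' \<subseteq> VV p q" using cm by (auto simp: cmove_def in_set_conv_nth)
    show "nxt (VV p q) Kpq_E D (set C') \<subseteq> VV p q" by (auto simp: nxt_def)
    show "LFst p q s n C' (nxt (VV p q) Kpq_E D (set C')) \<or> RFst p q s n C' (nxt (VV p q) Kpq_E D (set C'))"
      by (rule step[OF cm])
  qed
  then show ?case using Dne by simp
qed

lemma lower_init:
  assumes pq: "p < q" and p1: "1 \<le> p" and sq: "p * (s - 1) < q" and s2: "2 \<le> s"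
    and C: "length C = p" "set C \<subseteq> VV p q"
  shows "\<not> clr (VV p q) Kpq_E (2*s-3) C (VV p q - set C)"
proof (rule lower_main[OF assms(1-4) C])
  show "VV p q - set C \<subseteq> VV p q" by blast
  have "RR q \<subseteq> VV p q" by (simp add: V_LR)
  then have "RR q - (VV p q - set C) \<subseteq> RR q \<inter> set C" by blast
  then have d: "card (RR q - (VV p q - set C)) \<le> card (RR q \<inter> set C)" by (intro card_mono) (simp_all add: finRR)
  have cs: "card (RR q \<inter> set C) + card (LL p \<inter> set C) \<le> p" by (rule card_sides[OF C(1)])
  have e1: "(2*s-3) div 2 = s - 2" using s2 by linarith
  have e2: "(2*s-3+1) div 2 = s - 1" using s2 by linarith
  obtain t where t: "s = t + 2" using s2 by (metis add.commute le_Suc_ex)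
  have ps1: "p * (s - 1) = p * (s - 2) + p" using t by (simp add: algebra_simps)
  have ps: "p * s = p * (s - 1) + p" using t by (simp add: algebra_simps)
  have LS: "LL p - set C \<subseteq> VV p q - set C" by (simp add: V_LR) blast
  have n3: "2*s-3+3 \<le> 2*s" using s2 by linarith
  have A: "card (RR q - (VV p q - set C)) + p * ((2*s-3) div 2) \<le> p * (s - 1)"
    unfolding e1 using d cs ps1 by linarith
  have B: "card (RR q - (VV p q - set C)) + card (LL p \<inter> set C) + p * ((2*s-3+1) div 2) \<le> p * s"
    unfolding e2 using d cs ps by linarith
  show "LFst p q s (2*s-3) C (VV p q - set C) \<or> RFst p q s (2*s-3) C (VV p q - set C)"
    unfolding LFst_def using LS n3 A B by blast
qed



lemma ex_ceil:
  assumes "1 \<le> p" "1 \<le> q"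
  shows "\<exists>s::nat. q \<le> p*s \<and> p*(s-1) < q \<and> 1 \<le> s"
proof (cases "q mod p = 0")
  case True
  have q: "q = p * (q div p)" using True mult_div_mod_eq[of p q] by simp
  then have "1 \<le> q div p" using assms by (metis One_nat_def less_one mult_0_right not_le)
  moreover have "p * (q div p - 1) < q" using q assms \<open>1 \<le> q div p\<close>
    by (metis diff_less mult_less_cancel1 less_one not_le zero_less_one le_trans)
  ultimately show ?thesis using q by (intro exI[of _ "q div p"]) auto
next
  case False
  have q: "q = p * (q div p) + q mod p" by simp
  have "q mod p < p" using assms by simp
  then have "q \<le> p * (q div p) + p" using q by linarith
  then have A: "q \<le> p * (q div p + 1)" by (simp add: algebra_simps)
  have lt: "p * (q div p) < q" using q False by linarith
  then have B: "p * (q div p + 1 - 1) < q" by simp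
  show ?thesis using A B by (intro exI[of _ "q div p + 1"]) auto
qed

lemma ceil_eq:
  assumes "1 \<le> p" "q \<le> p*s" "p*(s-1) < q" "1 \<le> s"
  shows "\<lceil>real q / real p\<rceil> = int s"
proof (rule ceiling_unique)
  have pp: "real p > 0" using assms by simp
  have "real q \<le> real p * real s" using assms(2) by (metis of_nat_le_iff of_nat_mult)
  then show "real q / real p \<le> real_of_int (int s)" using pp by (simp add: divide_le_eq mult.commute)
  have "real p * (real s - 1) < real q" using assms(3,4)
    by (metis of_nat_1 of_nat_diff of_nat_less_iff of_nat_mult)
  then show "real_of_int (int s) - 1 < real q / real p" using pp by (simp add: less_divide_eq mult.commute)
qed

lemma blk_V: "1 \<le> q \<Longrightarrow> set (blk p q a) \<subseteq> Kpq_V p q"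
  by (auto simp: blk_def memV)

lemma capt_bound_from_clr:
  assumes "clr V E t C0 (V - set C0)" "length C0 = k" "set C0 \<subseteq> V"
  shows "capt_bound V E k m t"
  unfolding capt_bound_def
proof (intro exI[of _ C0] conjI allI impI)
  fix R0 assume R0: "length R0 = m \<and> set R0 \<subseteq> V"
  show "cops_win_within V E t C0 (capture C0 (map Some R0))"
  proof (rule clr_cww[OF assms(1)], intro allI impI)
    fix i v assume "i < length (capture C0 (map Some R0))" "capture C0 (map Some R0) ! i = Some v"
    then show "v \<in> V - set C0" using R0 by (auto simp: capture_Some)
  qed
qed (use assms in auto)

lemma capt_eq:
  assumes "capt_bound V E k m T" "\<And>t. t < T \<Longrightarrow> \<not> capt_bound V E k m t"
  shows "capt V E k m = T"
  unfolding capt_def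
proof (rule Least_equality)
  show "capt_bound V E k m T" by (rule assms(1))
  show "\<And>y. capt_bound V E k m y \<Longrightarrow> T \<le> y" using assms(2) not_le by blast
qed

theorem main_p:
  fixes p q :: nat
  assumes p1: "1 \<le> p" and pq: "p \<le> q"
  defines "T \<equiv> (if q > p then nat (2 * \<lceil>real q / real p\<rceil> - 2) else 1)"
  shows "cop_win (Kpq_V p q) Kpq_E p \<and>
      (\<forall>m\<ge>(p+q)^T. capt (Kpq_V p q) Kpq_E p m = T) \<and>
      real T = (if q > p then real_of_int (2 * \<lceil>real q / real p\<rceil> - 2) else 1)"
proof -
  have q1: "1 \<le> q" using p1 pq by simp
  obtain s where s: "q \<le> p*s" "p*(s-1) < q" "1 \<le> s" using ex_ceil[OF p1 q1] by blast
  have ce: "\<lceil>real q / real p\<rceil> = int s" by (rule ceil_eq[OF p1 s])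
  define C0 where "C0 = blk p q 0"
  have C0: "length C0 = p" "set C0 \<subseteq> Kpq_V p q" using blk_V[OF q1, of p 0] by (simp_all add: C0_def blk_def)
  have ALL: "1 \<le> T \<and> clr (Kpq_V p q) Kpq_E T C0 (Kpq_V p q - set C0) \<and>
      (\<forall>C. length C = p \<longrightarrow> set C \<subseteq> Kpq_V p q \<longrightarrow> \<not> clr (Kpq_V p q) Kpq_E (T - 1) C (Kpq_V p q - set C)) \<and>
      real T = (if q > p then real_of_int (2 * \<lceil>real q / real p\<rceil> - 2) else 1)"
    proof (cases "q > p")
      case True
      have s2: "2 \<le> s" using True s by (metis One_nat_def le_antisym mult.right_neutral not_less_eq_eq not_le numeral_2_eq_2)
      have TT: "T = 2*s-2" using True s2 by (simp add: T_def ce)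
      have "real T = real_of_int (2 * \<lceil>real q / real p\<rceil> - 2)" using TT s2 ce by simp
      moreover have "1 \<le> T" using TT s2 by simp
      moreover have "clr (Kpq_V p q) Kpq_E T C0 (Kpq_V p q - set C0)"
        using upper_gt[OF p1 True s2 s(1)] TT by (simp add: C0_def)
      moreover have "\<forall>C. length C = p \<longrightarrow> set C \<subseteq> Kpq_V p q \<longrightarrow> \<not> clr (Kpq_V p q) Kpq_E (T - 1) C (Kpq_V p q - set C)"
      proof (intro allI impI)
        fix C :: "(nat + nat) list" assume "length C = p" "set C \<subseteq> Kpq_V p q"
        then have "\<not> clr (Kpq_V p q) Kpq_E (2*s-3) C (Kpq_V p q - set C)"
          using lower_init[OF True p1 s(2) s2] by blast
        moreover have "T - 1 = 2*s-3" using TT by simp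
        ultimately show "\<not> clr (Kpq_V p q) Kpq_E (T - 1) C (Kpq_V p q - set C)" by simp
      qed
      ultimately show ?thesis using True by auto
    next
      case False
      then have qp: "q = p" using pq by simp
      have TT: "T = 1" using False by (simp add: T_def)
      have "\<forall>C. length C = p \<longrightarrow> set C \<subseteq> Kpq_V p q \<longrightarrow> \<not> clr (Kpq_V p q) Kpq_E (T - 1) C (Kpq_V p q - set C)"
      proof (intro allI impI)
        fix C :: "(nat + nat) list" assume C: "length C = p" "set C \<subseteq> Kpq_V p q"
        have "card (set C) \<le> p" using C card_length by metis
        also have "p < card (Kpq_V p q)" unfolding cardV using q1 by linarith
        finally have lt: "card (set C) < card (Kpq_V p q)" .
        have "\<not> Kpq_V p q \<subseteq> set C"
        proof
          assume "Kpq_V p q \<subseteq> set C"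
          then have "card (Kpq_V p q) \<le> card (set C)" by (rule card_mono[OF List.finite_set])
          with lt show False by simp
        qed
        then show "\<not> clr (Kpq_V p q) Kpq_E (T - 1) C (Kpq_V p q - set C)" using TT by auto
      qed
      moreover have "clr (Kpq_V p q) Kpq_E T C0 (Kpq_V p q - set C0)"
        using upper_eq[OF p1 qp[symmetric]] TT by (simp add: C0_def)
      ultimately show ?thesis using False TT by auto
    qed
  have Tpos: "1 \<le> T" and up: "clr (Kpq_V p q) Kpq_E T C0 (Kpq_V p q - set C0)"
    and low: "\<And>C. length C = p \<Longrightarrow> set C \<subseteq> Kpq_V p q \<Longrightarrow> \<not> clr (Kpq_V p q) Kpq_E (T - 1) C (Kpq_V p q - set C)"
    and Tr: "real T = (if q > p then real_of_int (2 * \<lceil>real q / real p\<rceil> - 2) else 1)"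
    using ALL by auto
  have ub: "capt_bound (Kpq_V p q) Kpq_E p m T" for m
    by (rule capt_bound_from_clr[OF up C0])
  have "capt (Kpq_V p q) Kpq_E p m = T" if m: "(p+q)^T \<le> m" for m
  proof (rule capt_eq[OF ub])
    fix t assume t: "t < T"
    show "\<not> capt_bound (Kpq_V p q) Kpq_E p m t"
    proof (rule capt_bound_lower[OF finV])
      fix C0 :: "(nat+nat) list" assume "length C0 = p" "set C0 \<subseteq> Kpq_V p q"
      then have "\<not> clr (Kpq_V p q) Kpq_E (T - 1) C0 (Kpq_V p q - set C0)" by (rule low)
      then show "\<not> clr (Kpq_V p q) Kpq_E t C0 (Kpq_V p q - set C0)"
        using clr_mono[of "Kpq_V p q" Kpq_E t C0 _ "T - 1"] t by auto
    next
      have "Suc t \<le> T" using t by simp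
      then have "(p+q) ^ Suc t \<le> (p+q)^T" by (rule power_increasing) (use p1 in simp)
      then show "card (Kpq_V p q) ^ Suc t \<le> m" unfolding cardV using m by linarith
    qed
  qed
  moreover have "cop_win (Kpq_V p q) Kpq_E p" using ub[of 1] by (auto simp: cop_win_def)
  ultimately show ?thesis using Tr by auto
qed

theorem mainTheorem17:
  fixes p q :: nat
  assumes "1 \<le> p" and "p \<le> q"
  shows "strong_cop_win (Kpq_V p q) Kpq_E p
       \<and> (\<forall>k. 1 \<le> k \<and> k \<le> p - 1 \<longrightarrow> \<not> strong_cop_win (Kpq_V p q) Kpq_E k)
       \<and> (\<lambda>m. real (capt (Kpq_V p q) Kpq_E p m)) \<longlonglongrightarrow>
           (if q > p then real_of_int (2 * \<lceil>real q / real p\<rceil> - 2) else 1)"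
proof -
  define T where "T = (if q > p then nat (2 * \<lceil>real q / real p\<rceil> - 2) else 1)"
  have M: "cop_win (Kpq_V p q) Kpq_E p \<and>
      (\<forall>m\<ge>(p+q)^T. capt (Kpq_V p q) Kpq_E p m = T) \<and>
      real T = (if q > p then real_of_int (2 * \<lceil>real q / real p\<rceil> - 2) else 1)"
    unfolding T_def by (rule main_p[OF assms])
  have lim: "(\<lambda>m. real (capt (Kpq_V p q) Kpq_E p m)) \<longlonglongrightarrow> real T"
  proof -
    have ev: "\<forall>m\<ge>(p+q)^T. real (capt (Kpq_V p q) Kpq_E p m) = real T" using M by simp
    have "eventually (\<lambda>m. real (capt (Kpq_V p q) Kpq_E p m) = real T) sequentially"
      unfolding eventually_sequentially using ev by blast
    then show ?thesis by (rule tendsto_eventually)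
  qed
  have strong: "strong_cop_win (Kpq_V p q) Kpq_E p"
    using M lim by (auto simp: strong_cop_win_def convergent_def)
  have weak: "\<not> strong_cop_win (Kpq_V p q) Kpq_E k" if k: "1 \<le> k" "k \<le> p - 1" for k
  proof (cases "k = 1")
    case True
    then show ?thesis using one_cop_not_win[of p q] k assms by (auto simp: strong_cop_win_def)
  next
    case False
    then have k2: "2 \<le> k" and kp: "k < p" using k by auto
    show ?thesis
    proof
      assume "strong_cop_win (Kpq_V p q) Kpq_E k"
      then have "Bseq (\<lambda>m. real (capt (Kpq_V p q) Kpq_E k m))"
        by (auto simp: strong_cop_win_def intro: convergent_imp_Bseq)
      then obtain K where K: "\<And>m. norm (real (capt (Kpq_V p q) Kpq_E k m)) \<le> K" by (meson BseqE)
      define t where "t = nat \<lceil>K\<rceil>"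
      define m where "m = (p+q) ^ Suc t"
      have ex: "capt_bound (Kpq_V p q) Kpq_E k m (2*m)" by (rule two_cops_bound[OF assms k2])
      then have cb: "capt_bound (Kpq_V p q) Kpq_E k m (capt (Kpq_V p q) Kpq_E k m)"
        unfolding capt_def by (rule LeastI)
      have nb: "\<not> capt_bound (Kpq_V p q) Kpq_E k m t'" if "t' \<le> t" for t'
      proof -
        have "(p+q) ^ Suc t' \<le> (p+q) ^ Suc t" using that assms by (intro power_increasing) auto
        then have cm: "card (Kpq_V p q) ^ Suc t' \<le> m" by (simp add: cardV m_def)
        show ?thesis
        proof (rule capt_bound_lower[OF finV _ cm])
          fix C0 :: "(nat+nat) list" assume "length C0 = k" "set C0 \<subseteq> Kpq_V p q"
          then show "\<not> clr (Kpq_V p q) Kpq_E t' C0 (Kpq_V p q - set C0)"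
            using few_never_clear[OF kp assms(2)] by blast
        qed
      qed
      have "t < capt (Kpq_V p q) Kpq_E k m" using nb cb not_le by blast
      then have "real t + 1 \<le> real (capt (Kpq_V p q) Kpq_E k m)" by linarith
      moreover have "K \<le> real t" unfolding t_def by linarith
      ultimately show False using K[of m] by simp
    qed
  qed
  show ?thesis using strong weak lim M by auto
qed

end
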